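(* Let $\varepsilon,\eta>0$. Then there exists $\kappa>0$ such that $\liminf_{n\to\infty}\mathbb{P}\Big(\max_{1\le k\le K}\sup_{x\in\mathbb{R}_+^2}\bar{\mathcal{Z}}^n_k(0)(C^\kappa_x)\le\varepsilon\Big)\ge1-\eta$.
   Context: Measures: $\mathbf{M}_2$ is the set of finite nonnegative Borel measures on $\mathbb{R}_+^2$ with the weak topology; $\mathbf{M}_2^K$ the product. $\langle f,\zeta\rangle=\int f\,d\zeta$ (coordinatewise for $\zeta\in\mathbf{M}_2^K$); $p_i(x)=x_i$. $C=\mathbb{R}_+\times\{0\}\cup\{0\}\times\mathbb{R}_+$, $C_x=\{y\in\mathbb{R}_+^2:y-x\in C\}$, and $C_x^\kappa=\{z\in\mathbb{R}_+^2:\inf_{y\in C_x}\|z-y\|<\kappa\}$. $\delta^+_{(x,y)}$: unit mass at $(x,y)$ if $x,y>0$, zero otherwise. Stochastic model: Fix $K$. For each class $k$: a renewal process $E_k$ of rate $\lambda_k\in(0,\infty)$ with strictly positive interarrival times; i.i.d. strictly positive service times $\{v_{k,i}\}$ with mean $1/\mu_k$; i.i.d. strictly positive deadlines $\{d_{k,i}\}$ with continuous distribution $\Gamma_k$ of finite mean; all mutually independent; $\sum_k\lambda_k/\mu_k>1$; $G_k(x)=1-\Gamma_k([0,x])$. The $n$-th system: $E^n_k(t)=E_k(nt)$, service times $v_{k,i}/n$, deadlines $d_{k,i}$; initial condition an a.s. finite integer $Z^n_+(0)\ge0$ and random $(\tilde w^n_j,\tilde p^n_j,k^n_j)\in(0,\infty)^2\times\{1,\dots,K\}$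 with $\tilde w^n_j$ nondecreasing, $\tilde w^n_1<\tilde p^n_1$, and for $2\le j\le Z^n_+(0)$, $\tilde p^n_j\le\tilde w^n_j$ iff $\tilde w^n_j=\tilde w^n_{j-1}$; $W^n(0)=\tilde w^n_{Z^n_+(0)}$ (0 if none). $Z^n_k(0)$ = number of initial jobs of class $k$, with data $(\tilde w^n_{k,j},\tilde p^n_{k,j})$, $j=1,\dots,Z^n_k(0)$, in index order. The initial fluid-scaled state is $\bar{\mathcal{Z}}^n_k(0)=\frac1n\sum_{j=1}^{Z^n_k(0)}\delta^+_{(\tilde w^n_{k,j},\tilde p^n_{k,j})}$, $\bar{\mathcal{Z}}^n(0)=(\bar{\mathcal{Z}}^n_1(0),\dots,\bar{\mathcal{Z}}^n_K(0))$. Standing assumptions: for $\vartheta\in\mathbf{M}_2^K$, $\vartheta_+=\sum_k\vartheta_k$, $w_\vartheta=\sup\{x:\vartheta_+([x,\infty)\times\mathbb{R}_+)>0\}$; $\mathbf{I}$ is the set of $\vartheta$ with $\vartheta_+(C_x)=0$ for all $x$, $w_\vartheta<\infty$, $\max_kG_k(w_\vartheta-\varepsilon)>0$ for all $\varepsilon>0$. $\mathcal{Z}^*_0$ is a random element of $\mathbf{M}_2^K$ with $\mathbb{P}(\mathcal{Z}^*_0\in\mathbf{I})=1$, $\mathbb{E}[\langle p_1+p_2,\mathcal{Z}^*_{0,+}\rangle]<\infty$, $\mathbb{E}[\mathcal{Z}^*_{0,+}(\mathbb{R}_+^2)]<\infty$; $W^*_0=w_{\mathcal{Z}^*_0}$;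 and $(\bar{\mathcal{Z}}^n(0),\langle p_1,\bar{\mathcal{Z}}^n(0)\rangle,\langle p_2,\bar{\mathcal{Z}}^n(0)\rangle,W^n(0))\Rightarrow(\mathcal{Z}^*_0,\langle p_1,\mathcal{Z}^*_0\rangle,\langle p_2,\mathcal{Z}^*_0\rangle,W^*_0)$ in distribution as $n\to\infty$. *)

theory Defs
  imports "HOL-Probability.Probability"
begin

definition Rp2 :: "(real \<times> real) set" where
  "Rp2 = {z. fst z \<ge> 0 \<and> snd z \<ge> 0}"

definition Ccone :: "(real \<times> real) set" where
  "Ccone = {(a, 0) | a. a \<ge> 0} \<union> {(0, b) | b. b \<ge> 0}"

definition Cx :: "real \<times> real \<Rightarrow> (real \<times> real) set" where
  "Cx x = {y \<in> Rp2. (fst y - fst x, snd y - snd x) \<in> Ccone}"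

definition Ckappa :: "real \<Rightarrow> real \<times> real \<Rightarrow> (real \<times> real) set" where
  "Ckappa \<kappa> x = {z \<in> Rp2. infdist z (Cx x) < \<kappa>}"

text \<open>M_2: finite nonnegative Borel measures on R_+^2, represented as finite Borel
  measures on the plane that put no mass outside R_+^2.\<close>
definition M2 :: "(real \<times> real) measure set" where
  "M2 = {\<zeta>. sets \<zeta> = sets borel \<and> emeasure \<zeta> UNIV < \<infinity> \<and> emeasure \<zeta> (UNIV - Rp2) = 0}"

definition weak_conv :: "(nat \<Rightarrow> (real \<times> real) measure) \<Rightarrow> (real \<times> real) measure \<Rightarrow> bool" where
  "weak_conv \<zeta>s \<zeta> \<longleftrightarrow>
     (\<forall>f :: real \<times> real \<Rightarrow> real. continuous_on UNIV f \<and> bounded (range f) \<longrightarrow>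
        (\<lambda>m. integral\<^sup>L (\<zeta>s m) f) \<longlonglongrightarrow> integral\<^sup>L \<zeta> f)"

definition delta_plus :: "real \<times> real \<Rightarrow> (real \<times> real) measure" where
  "delta_plus z = (if fst z > 0 \<and> snd z > 0 then return borel z else null_measure borel)"

text \<open>Fluid-scaled initial state of class k in the n-th system:
  (1/n) times the sum of delta^+ over the initial jobs of class k.\<close>
definition Zbar0 :: "nat \<Rightarrow> nat \<Rightarrow> (nat \<Rightarrow> real) \<Rightarrow> (nat \<Rightarrow> real) \<Rightarrow> (nat \<Rightarrow> 'k) \<Rightarrow> 'k
                     \<Rightarrow> (real \<times> real) measure" where
  "Zbar0 n Zp w p c k = measure_of UNIV (sets borel)
     (\<lambda>A. ennreal (1 / real n) *
          (\<Sum>j\<in>{j. 1 \<le> j \<and> j \<le> Zp \<and> c j = k}. emeasure (delta_plus (w j, p j)) A))"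

definition Winit :: "nat \<Rightarrow> (nat \<Rightarrow> real) \<Rightarrow> real" where
  "Winit Zp w = (if Zp = 0 then 0 else w Zp)"

definition valid_init :: "nat \<Rightarrow> (nat \<Rightarrow> real) \<Rightarrow> (nat \<Rightarrow> real) \<Rightarrow> bool" where
  "valid_init Zp w p \<longleftrightarrow>
     (\<forall>j. 1 \<le> j \<and> j \<le> Zp \<longrightarrow> w j > 0 \<and> p j > 0) \<and>
     (\<forall>i j. 1 \<le> i \<and> i \<le> j \<and> j \<le> Zp \<longrightarrow> w i \<le> w j) \<and>
     (1 \<le> Zp \<longrightarrow> w 1 < p 1) \<and>
     (\<forall>j. 2 \<le> j \<and> j \<le> Zp \<longrightarrow> (p j \<le> w j \<longleftrightarrow> w j = w (j - 1)))"

definition meas_plus :: "('k::finite \<Rightarrow> (real \<times> real) measure) \<Rightarrow> (real \<times> real) set \<Rightarrow> ennreal" where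
  "meas_plus th A = (\<Sum>k\<in>UNIV. emeasure (th k) A)"

definition wset :: "('k::finite \<Rightarrow> (real \<times> real) measure) \<Rightarrow> real set" where
  "wset th = {x. x \<ge> 0 \<and> meas_plus th ({x..} \<times> {0..}) > 0}"

definition wtheta :: "('k::finite \<Rightarrow> (real \<times> real) measure) \<Rightarrow> real" where
  "wtheta th = Sup ({0} \<union> wset th)"

definition Gfun :: "('k \<Rightarrow> real measure) \<Rightarrow> 'k \<Rightarrow> real \<Rightarrow> real" where
  "Gfun Gam k x = 1 - measure (Gam k) {0..x}"

definition Iset :: "('k::finite \<Rightarrow> real measure) \<Rightarrow> ('k \<Rightarrow> (real \<times> real) measure) set" where
  "Iset Gam = {th. (\<forall>x\<in>Rp2. meas_plus th (Cx x) = 0) \<and> bdd_above (wset th) \<and>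
                  (\<forall>\<epsilon>>0. (MAX k. Gfun Gam k (wtheta th - \<epsilon>)) > 0)}"

type_synonym 'k mstate = "('k \<Rightarrow> (real \<times> real) measure) \<times> ('k \<Rightarrow> real) \<times> ('k \<Rightarrow> real) \<times> real"

definition state_space :: "'k mstate set" where
  "state_space = {s. \<forall>k. fst s k \<in> M2}"

definition state_conv :: "(nat \<Rightarrow> 'k mstate) \<Rightarrow> 'k mstate \<Rightarrow> bool" where
  "state_conv ss s \<longleftrightarrow>
     (\<forall>k. weak_conv (\<lambda>m. fst (ss m) k) (fst s k)) \<and>
     (\<forall>k. (\<lambda>m. fst (snd (ss m)) k) \<longlonglongrightarrow> fst (snd s) k) \<and>
     (\<forall>k. (\<lambda>m. fst (snd (snd (ss m))) k) \<longlonglongrightarrow> fst (snd (snd s)) k) \<and>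
     (\<lambda>m. snd (snd (snd (ss m)))) \<longlonglongrightarrow> snd (snd (snd s))"

text \<open>Convergence in distribution: E[F(X_n)] -> E[F(Y)] for every bounded continuous F
  (the space is metrizable, so continuity = sequential continuity).\<close>
definition conv_in_dist :: "(nat \<Rightarrow> 'a measure) \<Rightarrow> (nat \<Rightarrow> 'a \<Rightarrow> 'k mstate) \<Rightarrow> 'b measure
                             \<Rightarrow> ('b \<Rightarrow> 'k mstate) \<Rightarrow> bool" where
  "conv_in_dist M X P Y \<longleftrightarrow>
     (\<forall>F :: 'k mstate \<Rightarrow> real.
        (\<exists>B. \<forall>s\<in>state_space. \<bar>F s\<bar> \<le> B) \<and>
        (\<forall>ss s. (\<forall>m. ss m \<in> state_space) \<and> s \<in> state_space \<and> state_conv ss s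
                 \<longrightarrow> (\<lambda>m. F (ss m)) \<longlonglongrightarrow> F s) \<and>
        (\<forall>n. (\<lambda>\<omega>. F (X n \<omega>)) \<in> borel_measurable (M n)) \<and>
        (\<lambda>\<omega>. F (Y \<omega>)) \<in> borel_measurable P
        \<longrightarrow> (\<lambda>n. \<integral>\<omega>. F (X n \<omega>) \<partial>M n) \<longlonglongrightarrow> (\<integral>\<omega>. F (Y \<omega>) \<partial>P))"

end

theory Submission
  imports Defs
begin


lemma nn_integral_kernel_measurable:
  fixes \<mu> :: "'b \<Rightarrow> (real \<times> real) measure"
  assumes sets_mu: "\<And>\<omega>. \<omega> \<in> space N \<Longrightarrow> sets (\<mu> \<omega>) = sets borel"
    and em: "\<And>A. A \<in> sets borel \<Longrightarrow> (\<lambda>\<omega>. emeasure (\<mu> \<omega>) A) \<in> borel_measurable N"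
    and u: "u \<in> borel_measurable borel"
  shows "(\<lambda>\<omega>. \<integral>\<^sup>+z. u z \<partial>(\<mu> \<omega>)) \<in> borel_measurable N"
  using u
proof (induct rule: borel_measurable_induct)
  case (cong f g)
  have "(\<lambda>\<omega>. \<integral>\<^sup>+z. g z \<partial>(\<mu> \<omega>)) \<in> borel_measurable N" by fact
  then show ?case
    by (rule measurable_cong[THEN iffD1, rotated]) (simp add: cong.hyps(3))
next
  case (set A)
  have "(\<lambda>\<omega>. emeasure (\<mu> \<omega>) A) \<in> borel_measurable N" using em set by simp
  then show ?case
    by (rule measurable_cong[THEN iffD1, rotated])
       (metis nn_integral_indicator sets_mu set)
next
  case (mult u c)
  have m: "\<And>\<omega>. \<omega> \<in> space N \<Longrightarrow> u \<in> borel_measurable (\<mu> \<omega>)"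
    using mult(2) sets_mu by (metis measurable_cong_sets)
  have "(\<lambda>\<omega>. c * \<integral>\<^sup>+z. u z \<partial>(\<mu> \<omega>)) \<in> borel_measurable N" using mult(4) by simp
  then show ?case
    by (rule measurable_cong[THEN iffD1, rotated]) (simp add: nn_integral_cmult m)
next
  case (add u v)
  have m: "\<And>\<omega>. \<omega> \<in> space N \<Longrightarrow> u \<in> borel_measurable (\<mu> \<omega>) \<and> v \<in> borel_measurable (\<mu> \<omega>)"
    using add(1,4) sets_mu by (metis measurable_cong_sets)
  have "(\<lambda>\<omega>. (\<integral>\<^sup>+z. v z \<partial>(\<mu> \<omega>)) + (\<integral>\<^sup>+z. u z \<partial>(\<mu> \<omega>))) \<in> borel_measurable N"
    using add(3,7) by simp
  then show ?case
    by (rule measurable_cong[THEN iffD1, rotated]) (simp add: nn_integral_add m)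
next
  case (seq U)
  have m: "\<And>\<omega> i. \<omega> \<in> space N \<Longrightarrow> U i \<in> borel_measurable (\<mu> \<omega>)"
    using seq(1) sets_mu by (metis measurable_cong_sets)
  have "(\<lambda>\<omega>. SUP i. \<integral>\<^sup>+z. U i z \<partial>(\<mu> \<omega>)) \<in> borel_measurable N"
    using seq(3) by simp
  then show ?case
    by (rule measurable_cong[THEN iffD1, rotated])
       (simp add: nn_integral_monotone_convergence_SUP[symmetric] m seq(4) SUP_apply image_comp)
qed



lemma delta_plus_sets[simp]: "sets (delta_plus z) = sets borel"
  by (simp add: delta_plus_def)

lemma emeasure_delta_plus:
  "A \<in> sets borel \<Longrightarrow> emeasure (delta_plus z) A = (if fst z > 0 \<and> snd z > 0 \<and> z \<in> A then 1 else 0)"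
  by (auto simp: delta_plus_def)

lemma Zbar0_sets[simp]: "sets (Zbar0 n Zp w p c k) = sets borel"
  unfolding Zbar0_def using sets.sigma_sets_eq[of "borel :: (real\<times>real) measure"]
  by (simp add: sets_measure_of_conv)

lemma Zbar0_space[simp]: "space (Zbar0 n Zp w p c k) = UNIV"
  unfolding Zbar0_def by simp

lemma Zbar0_emeasure0:
  assumes A: "A \<in> sets borel"
  shows "emeasure (Zbar0 n Zp w p c k) A = ennreal (1 / real n) *
          (\<Sum>j\<in>{j. 1 \<le> j \<and> j \<le> Zp \<and> c j = k}. emeasure (delta_plus (w j, p j)) A)"
proof -
  let ?J = "{j. 1 \<le> j \<and> j \<le> Zp \<and> c j = k}"
  have fin: "finite ?J" by (rule finite_subset[of _ "{..Zp}"]) auto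
  have sa: "sigma_algebra UNIV (sets (borel :: (real\<times>real) measure))"
    using sets.sigma_algebra_axioms[of "borel :: (real\<times>real) measure"] by simp
  have pos: "positive (sets borel) (\<lambda>A. ennreal (1 / real n) *
          (\<Sum>j\<in>?J. emeasure (delta_plus (w j, p j)) A))"
    by (simp add: positive_def)
  have ca: "countably_additive (sets borel) (\<lambda>A. ennreal (1 / real n) *
          (\<Sum>j\<in>?J. emeasure (delta_plus (w j, p j)) A))"
    unfolding countably_additive_def
  proof (intro allI impI)
    fix F :: "nat \<Rightarrow> (real\<times>real) set"
    assume F: "range F \<subseteq> sets borel" "disjoint_family F" "\<Union> (range F) \<in> sets borel"
    have "(\<Sum>i. ennreal (1 / real n) * (\<Sum>j\<in>?J. emeasure (delta_plus (w j, p j)) (F i)))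
        = ennreal (1 / real n) * (\<Sum>i. (\<Sum>j\<in>?J. emeasure (delta_plus (w j, p j)) (F i)))"
      by simp
    also have "(\<Sum>i. (\<Sum>j\<in>?J. emeasure (delta_plus (w j, p j)) (F i)))
        = (\<Sum>j\<in>?J. \<Sum>i. emeasure (delta_plus (w j, p j)) (F i))"
      by (rule suminf_sum) simp
    also have "\<dots> = (\<Sum>j\<in>?J. emeasure (delta_plus (w j, p j)) (\<Union> (range F)))"
      by (intro sum.cong refl suminf_emeasure) (use F in auto)
    finally show "(\<Sum>i. ennreal (1 / real n) * (\<Sum>j\<in>?J. emeasure (delta_plus (w j, p j)) (F i)))
        = ennreal (1 / real n) * (\<Sum>j\<in>?J. emeasure (delta_plus (w j, p j)) (\<Union> (range F)))" .
  qed
  show ?thesis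
    unfolding Zbar0_def by (rule emeasure_measure_of_sigma[OF sa pos ca A])
qed

lemma Zbar0_emeasure:
  assumes A: "A \<in> sets borel"
  shows "emeasure (Zbar0 n Zp w p c k) A = ennreal ((1 / real n) *
          (\<Sum>j\<in>{1..Zp}. if c j = k \<and> w j > 0 \<and> p j > 0 \<and> (w j, p j) \<in> A then 1 else 0))"
proof -
  have "(\<Sum>j\<in>{j. 1 \<le> j \<and> j \<le> Zp \<and> c j = k}. emeasure (delta_plus (w j, p j)) A)
      = (\<Sum>j\<in>{1..Zp}. if c j = k then emeasure (delta_plus (w j, p j)) A else 0)"
    by (rule sum.mono_neutral_cong_left) auto
  also have "\<dots> = (\<Sum>j\<in>{1..Zp}. ennreal (if c j = k \<and> w j > 0 \<and> p j > 0 \<and> (w j, p j) \<in> A then 1 else 0))"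
    by (intro sum.cong refl) (simp add: emeasure_delta_plus A)
  also have "\<dots> = ennreal (\<Sum>j\<in>{1..Zp}. if c j = k \<and> w j > 0 \<and> p j > 0 \<and> (w j, p j) \<in> A then 1 else 0)"
    by (rule sum_ennreal) simp
  finally have e: "(\<Sum>j\<in>{j. 1 \<le> j \<and> j \<le> Zp \<and> c j = k}. emeasure (delta_plus (w j, p j)) A)
     = ennreal (\<Sum>j\<in>{1..Zp}. if c j = k \<and> w j > 0 \<and> p j > 0 \<and> (w j, p j) \<in> A then 1 else 0)" .
  show ?thesis
    unfolding Zbar0_emeasure0[OF A] e
    by (rule ennreal_mult[symmetric]) (auto intro: sum_nonneg)
qed

lemma Zbar0_finite: "finite_measure (Zbar0 n Zp w p c k)"
proof (rule finite_measureI)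
  have "emeasure (Zbar0 n Zp w p c k) UNIV = ennreal ((1 / real n) *
          (\<Sum>j\<in>{1..Zp}. if c j = k \<and> w j > 0 \<and> p j > 0 \<and> (w j, p j) \<in> UNIV then 1 else 0))"
    by (rule Zbar0_emeasure) simp
  then show "emeasure (Zbar0 n Zp w p c k) (space (Zbar0 n Zp w p c k)) \<noteq> \<infinity>" by simp
qed

lemma Zbar0_measure:
  assumes A: "A \<in> sets borel"
  shows "measure (Zbar0 n Zp w p c k) A = (1 / real n) *
          (\<Sum>j\<in>{1..Zp}. if c j = k \<and> w j > 0 \<and> p j > 0 \<and> (w j, p j) \<in> A then 1 else 0)"
  unfolding measure_def by (simp add: Zbar0_emeasure[OF A] sum_nonneg)



definition clamp01 :: "real \<Rightarrow> real" where "clamp01 t = max 0 (min 1 t)"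

definition bdist :: "real \<times> real \<Rightarrow> real \<times> real \<Rightarrow> real" where
  "bdist x z = min (max (fst x - fst z) \<bar>snd z - snd x\<bar>) (max (snd x - snd z) \<bar>fst z - fst x\<bar>)"

definition band :: "real \<Rightarrow> real \<times> real \<Rightarrow> (real \<times> real) set" where
  "band d x = {z. bdist x z \<le> d}"

definition psi :: "real \<Rightarrow> real \<times> real \<Rightarrow> real \<times> real \<Rightarrow> real" where
  "psi \<kappa> g z = clamp01 ((3 * \<kappa> - bdist g z) / \<kappa>)"

definition tailf :: "real \<Rightarrow> real \<times> real \<Rightarrow> real" where
  "tailf R z = clamp01 (max (fst z) (snd z) - (R - 1))"

definition Tail :: "real \<Rightarrow> (real \<times> real) set" where
  "Tail R = {z. max (fst z) (snd z) > R - 1}"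

lemma clamp01_bounds: "0 \<le> clamp01 t" "clamp01 t \<le> 1"
  by (auto simp: clamp01_def)

lemma continuous_bdist: "continuous_on UNIV (bdist x)"
  unfolding bdist_def by (intro continuous_intros)

lemma continuous_psi: "\<kappa> \<noteq> 0 \<Longrightarrow> continuous_on UNIV (psi \<kappa> g)"
  unfolding psi_def clamp01_def bdist_def by (intro continuous_intros) auto

lemma continuous_tailf: "continuous_on UNIV (tailf R)"
  unfolding tailf_def clamp01_def by (intro continuous_intros)

lemma closed_band: "closed (band d x)"
  unfolding band_def by (rule closed_Collect_le[OF continuous_bdist continuous_on_const])

lemma band_borel[measurable]: "band d x \<in> sets borel"
  by (rule borel_closed[OF closed_band])

lemma open_Tail: "open (Tail R)"
  unfolding Tail_def by (intro open_Collect_less continuous_intros)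

lemma Tail_borel[measurable]: "Tail R \<in> sets borel"
  by (rule borel_open[OF open_Tail])

lemma bdist_shift:
  assumes "\<bar>fst x - fst g\<bar> \<le> a" "\<bar>snd x - snd g\<bar> \<le> a"
  shows "bdist g z \<le> bdist x z + a"
proof -
  have "fst g - fst z \<le> fst x - fst z + a" using assms(1) by (simp add: abs_le_iff)
  moreover have "\<bar>snd z - snd g\<bar> \<le> \<bar>snd z - snd x\<bar> + a"
    using abs_triangle_ineq[of "snd z - snd x" "snd x - snd g"] assms(2) by simp
  moreover have "snd g - snd z \<le> snd x - snd z + a" using assms(2) by (simp add: abs_le_iff)
  moreover have "\<bar>fst z - fst g\<bar> \<le> \<bar>fst z - fst x\<bar> + a"
    using abs_triangle_ineq[of "fst z - fst x" "fst x - fst g"] assms(1) by simp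
  ultimately have "max (fst g - fst z) \<bar>snd z - snd g\<bar> \<le> max (fst x - fst z) \<bar>snd z - snd x\<bar> + a"
     "max (snd g - snd z) \<bar>fst z - fst g\<bar> \<le> max (snd x - snd z) \<bar>fst z - fst x\<bar> + a"
    by (simp_all add: max_def)
  moreover have "\<And>A' B' A B. A' \<le> A + a \<Longrightarrow> B' \<le> B + a \<Longrightarrow> min A' B' \<le> min A B + (a::real)"
    by (auto simp: min_def)
  ultimately show ?thesis unfolding bdist_def by blast
qed

lemma bdist_tail:
  assumes "bdist x z < \<kappa>" "\<kappa> \<le> 1" "fst x > R + 2 \<or> snd x > R + 2"
  shows "tailf (R + 1) z = 1"
proof -
  have "fst z > R + 1 \<or> snd z > R + 1"
    using assms unfolding bdist_def by (auto simp: min_less_iff_disj abs_less_iff)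
  then have "max (fst z) (snd z) - R \<ge> 1" by auto
  then show ?thesis unfolding tailf_def clamp01_def by simp
qed

lemma psi_one: "\<kappa> > 0 \<Longrightarrow> bdist g z \<le> 2 * \<kappa> \<Longrightarrow> psi \<kappa> g z = 1"
  unfolding psi_def clamp01_def by (auto simp: field_simps)

lemma psi_le_band: "\<kappa> > 0 \<Longrightarrow> psi \<kappa> g z \<le> indicator (band (3 * \<kappa>) g) z"
  unfolding psi_def clamp01_def band_def by (auto simp: field_simps indicator_def)

lemma tailf_le_Tail: "tailf R z \<le> indicator (Tail R) z"
  unfolding tailf_def clamp01_def Tail_def by (auto simp: indicator_def)

lemma band0_Cx: "x \<in> Rp2 \<Longrightarrow> band 0 x \<subseteq> Cx x"
  unfolding band_def bdist_def Cx_def Rp2_def Ccone_def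
  by (auto simp: min_le_iff_disj)

lemma Ckappa_bdist:
  assumes x: "x \<in> Rp2" and z: "z \<in> Ckappa \<kappa> x"
  shows "bdist x z < \<kappa>"
proof -
  have xC: "x \<in> Cx x" using x by (auto simp: Cx_def Ccone_def)
  have "infdist z (Cx x) < \<kappa>" using z by (simp add: Ckappa_def)
  moreover have "infdist z (Cx x) = (INF y\<in>Cx x. dist z y)" by (rule infdist_notempty) (use xC in auto)
  ultimately have "(INF y\<in>Cx x. dist z y) < \<kappa>" by simp
  then obtain y where y: "y \<in> Cx x" "dist z y < \<kappa>"
    using xC by (subst (asm) cINF_less_iff) (auto intro: bdd_belowI[of _ 0])
  have d1: "\<bar>fst z - fst y\<bar> < \<kappa>" using dist_fst_le[of z y] y(2) by (simp add: dist_real_def)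
  have d2: "\<bar>snd z - snd y\<bar> < \<kappa>" using dist_snd_le[of z y] y(2) by (simp add: dist_real_def)
  from y(1) have "(snd y = snd x \<and> fst y \<ge> fst x) \<or> (fst y = fst x \<and> snd y \<ge> snd x)"
    by (auto simp: Cx_def Ccone_def)
  then show ?thesis
  proof
    assume h: "snd y = snd x \<and> fst y \<ge> fst x"
    have "max (fst x - fst z) \<bar>snd z - snd x\<bar> < \<kappa>" using d1 d2 h by (auto simp: abs_less_iff)
    then show ?thesis unfolding bdist_def by (simp add: min_less_iff_disj)
  next
    assume h: "fst y = fst x \<and> snd y \<ge> snd x"
    have "max (snd x - snd z) \<bar>fst z - fst x\<bar> < \<kappa>" using d1 d2 h by (auto simp: abs_less_iff)
    then show ?thesis unfolding bdist_def by (simp add: min_less_iff_disj)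
  qed
qed



lemma band_uniform:
  fixes \<mu> :: "(real \<times> real) measure"
  assumes fm: "finite_measure \<mu>" and sets_mu: "sets \<mu> = sets borel" and K: "compact K"
    and zero: "\<And>x. x \<in> K \<Longrightarrow> measure \<mu> (band 0 x) = 0" and e: "e > 0"
  shows "\<exists>\<delta>>0. \<forall>x\<in>K. measure \<mu> (band \<delta> x) < e"
proof -
  interpret finite_measure \<mu> by fact
  have "\<exists>d>0. measure \<mu> (band (2 * d) x) < e" if x: "x \<in> K" for x
  proof -
    have lim: "(\<lambda>j. measure \<mu> (band (1 / Suc j) x)) \<longlonglongrightarrow> measure \<mu> (\<Inter>j. band (1 / Suc j) x)"
    proof (rule finite_Lim_measure_decseq)
      show "range (\<lambda>j. band (1 / real (Suc j)) x) \<subseteq> sets \<mu>" by (auto simp: sets_mu band_borel)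
      show "decseq (\<lambda>j. band (1 / real (Suc j)) x)"
        unfolding decseq_def
      proof (intro allI impI subsetI)
        fix m n z assume mn: "m \<le> n" and z: "z \<in> band (1 / real (Suc n)) x"
        have "1 / real (Suc n) \<le> 1 / real (Suc m)" using mn by (intro divide_left_mono) auto
        then show "z \<in> band (1 / real (Suc m)) x" using z unfolding band_def by simp
      qed
    qed
    have sub: "(\<Inter>j. band (1 / Suc j) x) \<subseteq> band 0 x"
    proof
      fix z assume "z \<in> (\<Inter>j. band (1 / Suc j) x)"
      then have h: "bdist x z \<le> 1 / Suc j" for j by (auto simp: band_def)
      have "bdist x z \<le> 0"
      proof (rule ccontr)
        assume "\<not> bdist x z \<le> 0"
        then have "0 < bdist x z" by simp
        then obtain j where j: "1 / real (Suc j) < bdist x z"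
          by (rule nat_approx_posE)
        then show False using h[of j] j by linarith
      qed
      then show "z \<in> band 0 x" by (simp add: band_def)
    qed
    have "measure \<mu> (\<Inter>j. band (1 / Suc j) x) \<le> measure \<mu> (band 0 x)"
      by (rule finite_measure_mono[OF sub]) (simp add: sets_mu)
    then have "measure \<mu> (\<Inter>j. band (1 / Suc j) x) = 0" using zero[OF x] measure_nonneg[of \<mu> "\<Inter>j. band (1 / Suc j) x"] by linarith
    with lim have "(\<lambda>j. measure \<mu> (band (1 / Suc j) x)) \<longlonglongrightarrow> 0" by simp
    then have "eventually (\<lambda>j. measure \<mu> (band (1 / Suc j) x) < e) sequentially"
      using e by (rule order_tendstoD(2))
    then obtain j where mj: "measure \<mu> (band (1 / Suc j) x) < e"
      by (auto simp: eventually_sequentially)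
    have eq: "2 * (1 / (2 * real (Suc j))) = 1 / real (Suc j)" by (simp add: field_simps)
    show ?thesis
      by (rule exI[of _ "1 / (2 * real (Suc j))"]) (simp only: eq mj, simp)
  qed
  then obtain d where d: "\<And>x. x \<in> K \<Longrightarrow> d x > 0 \<and> measure \<mu> (band (2 * d x) x) < e"
    by metis
  have cover: "K \<subseteq> (\<Union>x\<in>K. ball x (d x))"
  proof
    fix x assume x: "x \<in> K"
    then have "x \<in> ball x (d x)" using d by simp
    then show "x \<in> (\<Union>x\<in>K. ball x (d x))" using x by blast
  qed
  have op: "\<And>T. T \<in> K \<Longrightarrow> open (ball T (d T))" by simp
  obtain C where C: "C \<subseteq> K" "finite C" "K \<subseteq> (\<Union>x\<in>C. ball x (d x))"
    by (rule compactE_image[OF K op cover])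
  show ?thesis
  proof (cases "C = {}")
    case True
    then show ?thesis using C by (intro exI[of _ 1]) auto
  next
    case False
    define \<delta> where "\<delta> = Min (d ` C)"
    have "\<forall>x\<in>C. 0 < d x" using C(1) d by blast
    then have \<delta>pos: "\<delta> > 0" unfolding \<delta>_def using C(2) False by (simp add: Min_gr_iff)
    have "\<forall>y\<in>K. measure \<mu> (band \<delta> y) < e"
    proof
      fix y assume "y \<in> K"
      then obtain x where x: "x \<in> C" "dist x y < d x" using C by auto
      have dl: "\<delta> \<le> d x" unfolding \<delta>_def using x C by (intro Min_le) auto
      have a1: "\<bar>fst y - fst x\<bar> \<le> d x" using dist_fst_le[of x y] x by (simp add: dist_real_def)
      have a2: "\<bar>snd y - snd x\<bar> \<le> d x" using dist_snd_le[of x y] x by (simp add: dist_real_def)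
      have "band \<delta> y \<subseteq> band (2 * d x) x"
      proof
        fix z assume "z \<in> band \<delta> y"
        then have "bdist y z \<le> \<delta>" by (simp add: band_def)
        then show "z \<in> band (2 * d x) x" using bdist_shift[OF a1 a2, of z] dl by (simp add: band_def)
      qed
      then have "measure \<mu> (band \<delta> y) \<le> measure \<mu> (band (2 * d x) x)"
        by (rule finite_measure_mono) (simp add: sets_mu)
      also have "\<dots> < e" using d[of x] x(1) C(1) by blast
      finally show "measure \<mu> (band \<delta> y) < e" .
    qed
    then show ?thesis using \<delta>pos by auto
  qed
qed



lemma integral_kernel_measurable:
  fixes \<mu> :: "'b \<Rightarrow> (real \<times> real) measure" and f :: "real \<times> real \<Rightarrow> real"
  assumes sets_mu: "\<And>\<omega>. \<omega> \<in> space N \<Longrightarrow> sets (\<mu> \<omega>) = sets borel"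
    and em: "\<And>A. A \<in> sets borel \<Longrightarrow> (\<lambda>\<omega>. emeasure (\<mu> \<omega>) A) \<in> borel_measurable N"
    and f: "f \<in> borel_measurable borel" and fnn: "\<And>z. 0 \<le> f z"
  shows "(\<lambda>\<omega>. integral\<^sup>L (\<mu> \<omega>) f) \<in> borel_measurable N"
proof -
  have mf: "(\<lambda>z. ennreal (f z)) \<in> borel_measurable borel" using f by measurable
  have "(\<lambda>\<omega>. \<integral>\<^sup>+z. ennreal (f z) \<partial>(\<mu> \<omega>)) \<in> borel_measurable N"
    by (rule nn_integral_kernel_measurable[where N=N and \<mu>=\<mu>]) (use sets_mu em mf in auto)
  then have "(\<lambda>\<omega>. enn2real (\<integral>\<^sup>+z. ennreal (f z) \<partial>(\<mu> \<omega>))) \<in> borel_measurable N"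
    by measurable
  then show ?thesis
  proof (rule measurable_cong[THEN iffD1, rotated])
    fix \<omega> assume "\<omega> \<in> space N"
    then have "f \<in> borel_measurable (\<mu> \<omega>)" using f sets_mu by (metis measurable_cong_sets)
    then show "enn2real (\<integral>\<^sup>+z. ennreal (f z) \<partial>(\<mu> \<omega>)) = integral\<^sup>L (\<mu> \<omega>) f"
      by (intro enn2real_nn_integral_eq_integral) (auto simp: fnn)
  qed
qed

lemma sum_random_range_measurable:
  fixes h :: "nat \<Rightarrow> 'a \<Rightarrow> real"
  assumes Z: "Z \<in> measurable M (count_space UNIV)"
    and h: "\<And>j. h j \<in> borel_measurable M"
  shows "(\<lambda>\<omega>. \<Sum>j\<in>{1..Z \<omega>}. h j \<omega>) \<in> borel_measurable M"
proof -
  have "(\<lambda>\<omega>. (\<lambda>i \<omega>. \<Sum>j\<in>{1..i}. h j \<omega>) (Z \<omega>) \<omega>) \<in> borel_measurable M"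
    by (rule measurable_compose_countable'[OF _ Z]) (use h in auto)
  then show ?thesis by simp
qed

lemma Zbar0_emeasure_measurable:
  fixes Zp :: "'a \<Rightarrow> nat" and wt pt :: "'a \<Rightarrow> nat \<Rightarrow> real" and cls :: "'a \<Rightarrow> nat \<Rightarrow> 'k"
  assumes Zp: "Zp \<in> measurable M (count_space UNIV)"
    and wt: "\<And>j. (\<lambda>\<omega>. wt \<omega> j) \<in> borel_measurable M"
    and pt: "\<And>j. (\<lambda>\<omega>. pt \<omega> j) \<in> borel_measurable M"
    and cls: "\<And>j. (\<lambda>\<omega>. cls \<omega> j) \<in> measurable M (count_space UNIV)"
    and A: "A \<in> sets borel"
  shows "(\<lambda>\<omega>. emeasure (Zbar0 n (Zp \<omega>) (wt \<omega>) (pt \<omega>) (cls \<omega>) k) A) \<in> borel_measurable M"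
proof -
  note [measurable] = wt pt cls A
  have h: "(\<lambda>\<omega>. if cls \<omega> j = k \<and> wt \<omega> j > 0 \<and> pt \<omega> j > 0 \<and> (wt \<omega> j, pt \<omega> j) \<in> A then 1 else 0 :: real)
      \<in> borel_measurable M" for j
    by measurable
  have "(\<lambda>\<omega>. \<Sum>j\<in>{1..Zp \<omega>}. (if cls \<omega> j = k \<and> wt \<omega> j > 0 \<and> pt \<omega> j > 0 \<and> (wt \<omega> j, pt \<omega> j) \<in> A then 1 else 0 :: real))
      \<in> borel_measurable M"
    by (rule sum_random_range_measurable[OF Zp h])
  then have "(\<lambda>\<omega>. ennreal ((1 / real n) * (\<Sum>j\<in>{1..Zp \<omega>}. (if cls \<omega> j = k \<and> wt \<omega> j > 0 \<and> pt \<omega> j > 0 \<and> (wt \<omega> j, pt \<omega> j) \<in> A then 1 else 0 :: real))))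
      \<in> borel_measurable M"
    by measurable
  then show ?thesis by (simp add: Zbar0_emeasure[OF A])
qed



lemma Cx_shift_infdist:
  assumes x: "x \<in> Rp2" and q1: "fst x \<le> fst q" and q2: "snd x \<le> snd q"
  shows "infdist z (Cx q) \<le> infdist z (Cx x) + dist x q"
proof -
  have xC: "x \<in> Cx x" using x by (auto simp: Cx_def Ccone_def)
  then have ne: "Cx x \<noteq> {}" by auto
  have "infdist z (Cx q) - dist x q \<le> (INF y\<in>Cx x. dist z y)"
  proof (rule cINF_greatest[OF ne])
    fix y assume y: "y \<in> Cx x"
    have y': "y + (q - x) \<in> Cx q"
      using y q1 q2 by (auto simp: Cx_def Rp2_def Ccone_def)
    have "infdist z (Cx q) \<le> dist z (y + (q - x))" by (rule infdist_le[OF y'])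
    also have "\<dots> \<le> dist z y + dist y (y + (q - x))" by (rule dist_triangle)
    also have "dist y (y + (q - x)) = dist x q" by (simp add: dist_norm algebra_simps)
    finally show "infdist z (Cx q) - dist x q \<le> dist z y" by simp
  qed
  moreover have "infdist z (Cx x) = (INF y\<in>Cx x. dist z y)" by (rule infdist_notempty[OF ne])
  ultimately show ?thesis by simp
qed

lemma Ckappa_rational_approx:
  assumes S: "finite S" and x: "x \<in> Rp2" and \<kappa>: "\<kappa> > 0"
  shows "\<exists>q. q \<in> Rp2 \<and> fst q \<in> \<rat> \<and> snd q \<in> \<rat> \<and> (\<forall>z\<in>S. z \<in> Ckappa \<kappa> x \<longrightarrow> z \<in> Ckappa \<kappa> q)"
proof -
  define S' where "S' = {z\<in>S. z \<in> Ckappa \<kappa> x}"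
  have fS': "finite S'" using S unfolding S'_def by simp
  define s where "s = Min (insert \<kappa> ((\<lambda>z. \<kappa> - infdist z (Cx x)) ` S'))"
  have spos: "s > 0" unfolding s_def using fS' \<kappa>
    by (subst Min_gr_iff) (auto simp: S'_def Ckappa_def)
  have sle: "s \<le> \<kappa> - infdist z (Cx x)" if "z \<in> S'" for z
    unfolding s_def using fS' that by (intro Min_le) auto
  obtain a where a: "a \<in> \<rat>" "fst x < a" "a < fst x + s / 2"
    using Rats_dense_in_real[of "fst x" "fst x + s / 2"] spos by auto
  obtain b where b: "b \<in> \<rat>" "snd x < b" "b < snd x + s / 2"
    using Rats_dense_in_real[of "snd x" "snd x + s / 2"] spos by auto
  have qR: "(a, b) \<in> Rp2" using x a b by (auto simp: Rp2_def)
  have "dist x (a, b) \<le> \<bar>fst x - a\<bar> + \<bar>snd x - b\<bar>"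
  proof -
    obtain x1 x2 where xx: "x = (x1, x2)" by (cases x)
    have "dist x (a, b) = sqrt ((dist x1 a)\<^sup>2 + (dist x2 b)\<^sup>2)" by (simp add: xx dist_Pair_Pair)
    also have "\<dots> \<le> \<bar>dist x1 a\<bar> + \<bar>dist x2 b\<bar>" by (rule sqrt_sum_squares_le_sum_abs)
    finally show ?thesis by (simp add: xx dist_real_def)
  qed
  also have "\<dots> < s" using a b by simp
  finally have dq: "dist x (a, b) < s" .
  have "\<forall>z\<in>S. z \<in> Ckappa \<kappa> x \<longrightarrow> z \<in> Ckappa \<kappa> (a, b)"
  proof (intro ballI impI)
    fix z assume z: "z \<in> S" "z \<in> Ckappa \<kappa> x"
    then have zS': "z \<in> S'" by (simp add: S'_def)
    have "infdist z (Cx (a, b)) \<le> infdist z (Cx x) + dist x (a, b)"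
      by (rule Cx_shift_infdist[OF x]) (use a b in auto)
    also have "\<dots> < \<kappa>" using sle[OF zS'] dq by simp
    finally show "z \<in> Ckappa \<kappa> (a, b)" using z by (simp add: Ckappa_def)
  qed
  then show ?thesis using qR a b by (intro exI[of _ "(a, b)"]) auto
qed

lemma floor_grid:
  fixes t \<kappa> B :: real
  assumes \<kappa>: "\<kappa> > 0" and t: "0 \<le> t" "t \<le> B"
  shows "\<kappa> * real (nat \<lfloor>t / \<kappa>\<rfloor>) \<le> t" "t < \<kappa> * real (nat \<lfloor>t / \<kappa>\<rfloor>) + \<kappa>"
    "nat \<lfloor>t / \<kappa>\<rfloor> \<le> nat \<lceil>B / \<kappa>\<rceil>"
proof -
  have t0: "0 \<le> t / \<kappa>" using t \<kappa> by simp
  then have fl: "real (nat \<lfloor>t / \<kappa>\<rfloor>) = of_int \<lfloor>t / \<kappa>\<rfloor>" by simp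
  have f1: "of_int \<lfloor>t / \<kappa>\<rfloor> \<le> t / \<kappa>" by simp
  have f2: "t / \<kappa> < of_int \<lfloor>t / \<kappa>\<rfloor> + 1" by simp
  have "\<kappa> * of_int \<lfloor>t / \<kappa>\<rfloor> \<le> \<kappa> * (t / \<kappa>)" using f1 \<kappa> by (intro mult_left_mono) auto
  then show "\<kappa> * real (nat \<lfloor>t / \<kappa>\<rfloor>) \<le> t" using \<kappa> by (simp add: fl)
  have "\<kappa> * (t / \<kappa>) < \<kappa> * (of_int \<lfloor>t / \<kappa>\<rfloor> + 1)" using f2 \<kappa> by (intro mult_strict_left_mono) auto
  then show "t < \<kappa> * real (nat \<lfloor>t / \<kappa>\<rfloor>) + \<kappa>" using \<kappa> by (simp add: fl algebra_simps)
  have "t / \<kappa> \<le> B / \<kappa>" using t \<kappa> by (simp add: divide_right_mono)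
  also have "\<dots> \<le> of_int \<lceil>B / \<kappa>\<rceil>" by simp
  finally have "of_int \<lfloor>t / \<kappa>\<rfloor> \<le> (of_int \<lceil>B / \<kappa>\<rceil> :: real)" using f1 by linarith
  then have "\<lfloor>t / \<kappa>\<rfloor> \<le> \<lceil>B / \<kappa>\<rceil>" by linarith
  then show "nat \<lfloor>t / \<kappa>\<rfloor> \<le> nat \<lceil>B / \<kappa>\<rceil>" by (rule nat_mono)
qed

lemma cover_Ckappa:
  fixes R \<kappa> :: real
  assumes \<kappa>: "\<kappa> > 0" "\<kappa> \<le> 1" and x: "x \<in> Rp2"
  shows "(\<forall>z\<in>Ckappa \<kappa> x. tailf (R + 1) z = 1) \<or>
         (\<exists>i\<le>nat \<lceil>(R + 2) / \<kappa>\<rceil>. \<exists>j\<le>nat \<lceil>(R + 2) / \<kappa>\<rceil>.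
             \<forall>z\<in>Ckappa \<kappa> x. psi \<kappa> (\<kappa> * real i, \<kappa> * real j) z = 1)"
proof (cases "fst x > R + 2 \<or> snd x > R + 2")
  case True
  then show ?thesis using Ckappa_bdist[OF x] bdist_tail[OF _ \<kappa>(2) True] by blast
next
  case False
  have x0: "0 \<le> fst x" "0 \<le> snd x" using x by (auto simp: Rp2_def)
  have xb: "fst x \<le> R + 2" "snd x \<le> R + 2" using False by auto
  note g1 = floor_grid[OF \<kappa>(1) x0(1) xb(1)]
  note g2 = floor_grid[OF \<kappa>(1) x0(2) xb(2)]
  define g where "g = (\<kappa> * real (nat \<lfloor>fst x / \<kappa>\<rfloor>), \<kappa> * real (nat \<lfloor>snd x / \<kappa>\<rfloor>))"
  have a1: "\<bar>fst x - fst g\<bar> \<le> \<kappa>" using g1 by (simp add: g_def)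
  have a2: "\<bar>snd x - snd g\<bar> \<le> \<kappa>" using g2 by (simp add: g_def)
  have "\<forall>z\<in>Ckappa \<kappa> x. psi \<kappa> g z = 1"
  proof
    fix z assume "z \<in> Ckappa \<kappa> x"
    then have "bdist x z < \<kappa>" by (rule Ckappa_bdist[OF x])
    then have "bdist g z \<le> 2 * \<kappa>" using bdist_shift[OF a1 a2, of z] by simp
    then show "psi \<kappa> g z = 1" by (rule psi_one[OF \<kappa>(1)])
  qed
  then show ?thesis using g1(3) g2(3) unfolding g_def by blast
qed



lemma tendsto_Max_finite:
  fixes f :: "'i \<Rightarrow> 'a \<Rightarrow> real"
  assumes "finite I" "I \<noteq> {}" "\<And>i. i \<in> I \<Longrightarrow> (f i \<longlongrightarrow> l i) F"
  shows "((\<lambda>x. Max ((\<lambda>i. f i x) ` I)) \<longlongrightarrow> Max (l ` I)) F"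
  using assms
proof (induction I rule: finite_ne_induct)
  case (singleton a)
  then show ?case by simp
next
  case (insert a A)
  have "((\<lambda>x. max (f a x) (Max ((\<lambda>i. f i x) ` A))) \<longlongrightarrow> max (l a) (Max (l ` A))) F"
    using insert by (intro tendsto_max) auto
  then show ?case using insert by (simp add: Max_insert)
qed

lemma clamp01_tendsto:
  "(f \<longlongrightarrow> l) F \<Longrightarrow> ((\<lambda>x. clamp01 (f x)) \<longlongrightarrow> clamp01 l) F"
  unfolding clamp01_def by (intro tendsto_intros) auto

lemma clamp01_pos: "clamp01 t > 0 \<Longrightarrow> t > 0"
  by (auto simp: clamp01_def)

lemma clamp01_one: "t \<ge> 1 \<Longrightarrow> clamp01 t = 1"
  by (auto simp: clamp01_def)

lemma clamp01_measurable[measurable]: "clamp01 \<in> borel_measurable borel"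
  unfolding clamp01_def by measurable

lemma band0_eq_Cx: "x \<in> Rp2 \<Longrightarrow> band 0 x = Cx x"
proof
  assume x: "x \<in> Rp2"
  show "band 0 x \<subseteq> Cx x" by (rule band0_Cx[OF x])
  show "Cx x \<subseteq> band 0 x"
  proof
    fix z assume "z \<in> Cx x"
    then have "(snd z = snd x \<and> fst z \<ge> fst x) \<or> (fst z = fst x \<and> snd z \<ge> snd x)"
      by (auto simp: Cx_def Ccone_def)
    then show "z \<in> band 0 x" unfolding band_def bdist_def by (auto simp: min_le_iff_disj)
  qed
qed

lemma Ckappa_borel[measurable]: "Ckappa \<kappa> x \<in> sets borel"
proof -
  have "Ckappa \<kappa> x = Rp2 \<inter> {z. infdist z (Cx x) < \<kappa>}" by (auto simp: Ckappa_def)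
  moreover have "closed Rp2" unfolding Rp2_def
    by (intro closed_Collect_conj closed_Collect_le continuous_intros)
  moreover have "open {z. infdist z (Cx x) < \<kappa>}"
    by (intro open_Collect_less continuous_intros)
  ultimately show ?thesis by (simp add: borel_closed borel_open sets.Int)
qed

lemma bounded_01_range: "(\<And>z. 0 \<le> f z \<and> f z \<le> (1::real)) \<Longrightarrow> bounded (range f)"
  by (rule bounded_subset[of "{0..1}"]) auto

lemma integral_le_measure:
  fixes \<mu> :: "(real \<times> real) measure" and f :: "real \<times> real \<Rightarrow> real"
  assumes fm: "finite_measure \<mu>" and s: "sets \<mu> = sets borel" and A: "A \<in> sets borel"
    and f: "f \<in> borel_measurable borel" and fb: "\<And>z. f z \<le> indicator A z" "\<And>z. 0 \<le> f z"
  shows "integral\<^sup>L \<mu> f \<le> measure \<mu> A"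
proof -
  interpret finite_measure \<mu> by fact
  have fm': "f \<in> borel_measurable \<mu>" using f s by (metis measurable_cong_sets)
  have A': "A \<in> sets \<mu>" using A s by simp
  have "integral\<^sup>L \<mu> f \<le> integral\<^sup>L \<mu> (indicator A)"
  proof (rule integral_mono)
    show "integrable \<mu> f"
      by (rule integrable_const_bound[where B=1]) (use fm' fb order_trans[OF fb(1) indicator_le_1] in auto)
    show "integrable \<mu> (indicator A :: _ \<Rightarrow> real)"
      by (rule integrable_const_bound[where B=1]) (use A' in auto)
  qed (use fb in auto)
  also have "\<dots> = measure \<mu> A" using A' by (simp add: sets.Int_space_eq2)
  finally show ?thesis .
qed

lemma emeasure_le_integral:
  fixes \<mu> :: "(real \<times> real) measure" and f :: "real \<times> real \<Rightarrow> real"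
  assumes fm: "finite_measure \<mu>" and s: "sets \<mu> = sets borel" and A: "A \<in> sets borel"
    and f: "f \<in> borel_measurable borel" and fb: "\<And>z. 0 \<le> f z" "\<And>z. f z \<le> 1"
    and one: "\<And>z. z \<in> A \<Longrightarrow> f z = 1"
  shows "emeasure \<mu> A \<le> ennreal (integral\<^sup>L \<mu> f)"
proof -
  interpret finite_measure \<mu> by fact
  have fm': "f \<in> borel_measurable \<mu>" using f s by (metis measurable_cong_sets)
  have A': "A \<in> sets \<mu>" using A s by simp
  have "emeasure \<mu> A = (\<integral>\<^sup>+z. indicator A z \<partial>\<mu>)" using A' by simp
  also have "\<dots> \<le> (\<integral>\<^sup>+z. ennreal (f z) \<partial>\<mu>)"
    by (intro nn_integral_mono) (auto simp: indicator_def one)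
  also have "\<dots> = ennreal (integral\<^sup>L \<mu> f)"
  proof (rule nn_integral_eq_integral)
    show "integrable \<mu> f"
      by (rule integrable_const_bound[where B=1]) (use fm' fb in auto)
  qed (use fb in auto)
  finally show ?thesis .
qed



theorem lemma5p7:
  fixes Gam :: "'k::finite \<Rightarrow> real measure"
    and M :: "nat \<Rightarrow> 'a measure"
    and Zp :: "nat \<Rightarrow> 'a \<Rightarrow> nat"
    and wt pt :: "nat \<Rightarrow> 'a \<Rightarrow> nat \<Rightarrow> real"
    and cls :: "nat \<Rightarrow> 'a \<Rightarrow> nat \<Rightarrow> 'k"
    and P :: "'b measure"
    and Zs :: "'b \<Rightarrow> 'k \<Rightarrow> (real \<times> real) measure"
    and \<epsilon> \<eta> :: real
  assumes Gam_prob: "\<And>k. prob_space (Gam k)"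
    and Gam_sets: "\<And>k. sets (Gam k) = sets borel"
    and Gam_cont: "\<And>k x. emeasure (Gam k) {x} = 0"
    and Gam_pos: "\<And>k. emeasure (Gam k) {..0} = 0"
    and Gam_mean: "\<And>k. integrable (Gam k) (\<lambda>x. x)"
    and M_prob: "\<And>n. prob_space (M n)"
    and Zp_meas: "\<And>n. Zp n \<in> measurable (M n) (count_space UNIV)"
    and wt_meas: "\<And>n j. (\<lambda>\<omega>. wt n \<omega> j) \<in> borel_measurable (M n)"
    and pt_meas: "\<And>n j. (\<lambda>\<omega>. pt n \<omega> j) \<in> borel_measurable (M n)"
    and cls_meas: "\<And>n j. (\<lambda>\<omega>. cls n \<omega> j) \<in> measurable (M n) (count_space UNIV)"
    and init_valid: "\<And>n \<omega>. \<omega> \<in> space (M n) \<Longrightarrow> valid_init (Zp n \<omega>) (wt n \<omega>) (pt n \<omega>)"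
    and P_prob: "prob_space P"
    and Zs_M2: "\<And>\<omega> k. \<omega> \<in> space P \<Longrightarrow> Zs \<omega> k \<in> M2"
    and Zs_meas: "\<And>k A. A \<in> sets borel \<Longrightarrow> (\<lambda>\<omega>. measure (Zs \<omega> k) A) \<in> borel_measurable P"
    and Zs_I: "AE \<omega> in P. Zs \<omega> \<in> Iset Gam"
    and Zs_first_moment:
      "(\<integral>\<^sup>+\<omega>. (\<Sum>k\<in>UNIV. \<integral>\<^sup>+z. ennreal (fst z + snd z) \<partial>(Zs \<omega> k)) \<partial>P) < \<infinity>"
    and Zs_mass: "(\<integral>\<^sup>+\<omega>. (\<Sum>k\<in>UNIV. emeasure (Zs \<omega> k) UNIV) \<partial>P) < \<infinity>"
    and conv: "conv_in_dist M
        (\<lambda>n \<omega>. (\<lambda>k. Zbar0 n (Zp n \<omega>) (wt n \<omega>) (pt n \<omega>) (cls n \<omega>) k,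
                 \<lambda>k. integral\<^sup>L (Zbar0 n (Zp n \<omega>) (wt n \<omega>) (pt n \<omega>) (cls n \<omega>) k) fst,
                 \<lambda>k. integral\<^sup>L (Zbar0 n (Zp n \<omega>) (wt n \<omega>) (pt n \<omega>) (cls n \<omega>) k) snd,
                 Winit (Zp n \<omega>) (wt n \<omega>)))
        P
        (\<lambda>\<omega>. (Zs \<omega>, \<lambda>k. integral\<^sup>L (Zs \<omega> k) fst, \<lambda>k. integral\<^sup>L (Zs \<omega> k) snd, wtheta (Zs \<omega>)))"
    and eps_pos: "\<epsilon> > 0"
    and eta_pos: "\<eta> > 0"
  shows "\<exists>\<kappa>>0. Liminf sequentially
           (\<lambda>n. ereal (measure (M n)
              {\<omega> \<in> space (M n).
                 (MAX k. SUP x\<in>Rp2. emeasure (Zbar0 n (Zp n \<omega>) (wt n \<omega>) (pt n \<omega>) (cls n \<omega>) k)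
                                       (Ckappa \<kappa> x)) \<le> ennreal \<epsilon>}))
         \<ge> ereal (1 - \<eta>)"
proof -
  interpret P: prob_space P by (rule P_prob)
  have e2: "\<epsilon> / 2 > 0" using eps_pos by simp
  have ZsS: "sets (Zs \<omega> k) = sets borel" if "\<omega> \<in> space P" for \<omega> k
    using Zs_M2[OF that] by (simp add: M2_def)
  have ZsF: "finite_measure (Zs \<omega> k)" if "\<omega> \<in> space P" for \<omega> k
  proof (rule finite_measureI)
    have "space (Zs \<omega> k) = UNIV" using ZsS[OF that] sets_eq_imp_space_eq[of "Zs \<omega> k" borel] by simp
    then show "emeasure (Zs \<omega> k) (space (Zs \<omega> k)) \<noteq> \<infinity>"
      using Zs_M2[OF that] by (simp add: M2_def less_top)
  qed
  have Zs_em: "(\<lambda>\<omega>. emeasure (Zs \<omega> k) A) \<in> borel_measurable P" if A: "A \<in> sets borel" for k A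
  proof -
    have "(\<lambda>\<omega>. ennreal (measure (Zs \<omega> k) A)) \<in> borel_measurable P"
      using Zs_meas[OF A] by measurable
    then show ?thesis
    proof (rule measurable_cong[THEN iffD1, rotated])
      fix \<omega> assume "\<omega> \<in> space P"
      then show "ennreal (measure (Zs \<omega> k) A) = emeasure (Zs \<omega> k) A"
        using finite_measure.emeasure_eq_measure[OF ZsF] by simp
    qed
  qed

  define T where "T R = {\<omega> \<in> space P. \<forall>k. measure (Zs \<omega> k) (Tail (real R + 1)) \<le> \<epsilon> / 2}" for R :: nat
  have T_sets: "T R \<in> sets P" for R
  proof -
    note [measurable] = Zs_meas[OF Tail_borel]
    show ?thesis unfolding T_def by measurable
  qed
  have T_inc: "incseq T"
  proof (rule incseq_SucI, rule subsetI)
    fix R \<omega> assume \<omega>: "\<omega> \<in> T R"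
    then have sp: "\<omega> \<in> space P" by (simp add: T_def)
    have "measure (Zs \<omega> k) (Tail (real (Suc R) + 1)) \<le> \<epsilon> / 2" for k
    proof -
      have "Tail (real (Suc R) + 1) \<subseteq> Tail (real R + 1)" by (auto simp: Tail_def)
      then have "measure (Zs \<omega> k) (Tail (real (Suc R) + 1)) \<le> measure (Zs \<omega> k) (Tail (real R + 1))"
        using finite_measure.finite_measure_mono[OF ZsF[OF sp]] ZsS[OF sp] by simp
      moreover have "measure (Zs \<omega> k) (Tail (real R + 1)) \<le> \<epsilon> / 2" using \<omega> by (simp add: T_def)
      ultimately show ?thesis by linarith
    qed
    then show "\<omega> \<in> T (Suc R)" using sp by (simp add: T_def)
  qed
  have T_Un: "(\<Union>R. T R) = space P"
  proof
    show "(\<Union>R. T R) \<subseteq> space P" by (auto simp: T_def)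
    show "space P \<subseteq> (\<Union>R. T R)"
    proof
      fix \<omega> assume sp: "\<omega> \<in> space P"
      have "eventually (\<lambda>R. measure (Zs \<omega> k) (Tail (real R + 1)) \<le> \<epsilon> / 2) sequentially" for k
      proof -
        interpret Fk: finite_measure "Zs \<omega> k" by (rule ZsF[OF sp])
        have lim: "(\<lambda>R. measure (Zs \<omega> k) (Tail (real R + 1))) \<longlonglongrightarrow> measure (Zs \<omega> k) (\<Inter>R. Tail (real R + 1))"
        proof (rule Fk.finite_Lim_measure_decseq)
          show "range (\<lambda>R. Tail (real R + 1)) \<subseteq> sets (Zs \<omega> k)" using ZsS[OF sp] by auto
          show "decseq (\<lambda>R. Tail (real R + 1))" by (auto simp: decseq_def Tail_def)
        qed
        have "(\<Inter>R. Tail (real R + 1)) = {}"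
        proof (rule ccontr)
          assume "(\<Inter>R. Tail (real R + 1)) \<noteq> {}"
          then obtain z where z: "\<And>R. z \<in> Tail (real R + 1)" by blast
          obtain R :: nat where "max (fst z) (snd z) < real R" using reals_Archimedean2 by blast
          then show False using z[of R] by (auto simp: Tail_def max_def split: if_splits)
        qed
        with lim have "(\<lambda>R. measure (Zs \<omega> k) (Tail (real R + 1))) \<longlonglongrightarrow> 0" by simp
        from order_tendstoD(2)[OF this e2] show ?thesis by eventually_elim simp
      qed
      then have "eventually (\<lambda>R. \<forall>k. measure (Zs \<omega> k) (Tail (real R + 1)) \<le> \<epsilon> / 2) sequentially"
        by (rule eventually_all_finite)
      then obtain R where "\<forall>k. measure (Zs \<omega> k) (Tail (real R + 1)) \<le> \<epsilon> / 2"
        by (auto simp: eventually_sequentially)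
      then show "\<omega> \<in> (\<Union>R. T R)" using sp by (auto simp: T_def)
    qed
  qed
  have "(\<lambda>R. P.prob (T R)) \<longlonglongrightarrow> P.prob (\<Union>R. T R)"
    by (rule P.finite_Lim_measure_incseq) (use T_sets T_inc in auto)
  then have "(\<lambda>R. P.prob (T R)) \<longlonglongrightarrow> 1" using T_Un P.prob_space by simp
  moreover have "1 - \<eta> / 2 < (1::real)" using eta_pos by simp
  ultimately have "eventually (\<lambda>R. 1 - \<eta> / 2 < P.prob (T R)) sequentially"
    by (rule order_tendstoD(1))
  then obtain R where TR: "P.prob (T R) > 1 - \<eta> / 2" by (auto simp: eventually_sequentially)

  define Box where "Box = cbox (0::real, 0::real) (real R + 3, real R + 3)"
  have Box_mem: "q \<in> Box \<longleftrightarrow> 0 \<le> fst q \<and> fst q \<le> real R + 3 \<and> 0 \<le> snd q \<and> snd q \<le> real R + 3" for q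
    unfolding Box_def by (cases q) (simp add: cbox_Pair_eq)
  have Box_Rp2: "Box \<subseteq> Rp2" by (auto simp: Box_mem Rp2_def)
  define Qb where "Qb = {q. fst q \<in> \<rat> \<and> snd q \<in> \<rat> \<and> q \<in> Box}"
  have Qb_count: "countable Qb"
    by (rule countable_subset[of _ "\<rat> \<times> \<rat>"]) (auto simp: Qb_def countable_rat mem_Times_iff)
  define E where "E m = {\<omega> \<in> space P. \<forall>k. \<forall>q\<in>Qb. measure (Zs \<omega> k) (band (1 / real (Suc m)) q) \<le> \<epsilon> / 2}" for m :: nat
  have E_sets: "E m \<in> sets P" for m
  proof -
    have "{\<omega> \<in> space P. \<forall>q\<in>Qb. measure (Zs \<omega> k) (band (1 / real (Suc m)) q) \<le> \<epsilon> / 2} \<in> sets P" for k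
    proof (rule sets.sets_Collect_countable_All'[OF _ Qb_count])
      fix q
      note [measurable] = Zs_meas[OF band_borel]
      show "{\<omega> \<in> space P. measure (Zs \<omega> k) (band (1 / real (Suc m)) q) \<le> \<epsilon> / 2} \<in> sets P"
        by measurable
    qed
    then have "{\<omega> \<in> space P. \<forall>k. \<forall>q\<in>Qb. measure (Zs \<omega> k) (band (1 / real (Suc m)) q) \<le> \<epsilon> / 2} \<in> sets P"
      by (intro sets.sets_Collect_countable_All)
    then show ?thesis by (simp add: E_def)
  qed
  have E_inc: "incseq E"
  proof (rule incseq_SucI, rule subsetI)
    fix m \<omega> assume \<omega>: "\<omega> \<in> E m"
    then have sp: "\<omega> \<in> space P" by (simp add: E_def)
    have "measure (Zs \<omega> k) (band (1 / real (Suc (Suc m))) q) \<le> \<epsilon> / 2" if q: "q \<in> Qb" for k q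
    proof -
      have "1 / real (Suc (Suc m)) \<le> 1 / real (Suc m)" by (intro divide_left_mono) auto
      then have "band (1 / real (Suc (Suc m))) q \<subseteq> band (1 / real (Suc m)) q" by (auto simp: band_def)
      then have "measure (Zs \<omega> k) (band (1 / real (Suc (Suc m))) q) \<le> measure (Zs \<omega> k) (band (1 / real (Suc m)) q)"
        using finite_measure.finite_measure_mono[OF ZsF[OF sp]] ZsS[OF sp] by simp
      moreover have "measure (Zs \<omega> k) (band (1 / real (Suc m)) q) \<le> \<epsilon> / 2" using \<omega> q by (simp add: E_def)
      ultimately show ?thesis by linarith
    qed
    then show "\<omega> \<in> E (Suc m)" using sp by (simp add: E_def)
  qed
  have E_AE: "AE \<omega> in P. \<omega> \<in> (\<Union>m. E m)"
    using Zs_I AE_space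
  proof eventually_elim
    case (elim \<omega>)
    then have I: "Zs \<omega> \<in> Iset Gam" and sp: "\<omega> \<in> space P" by auto
    have "eventually (\<lambda>m. \<forall>q\<in>Qb. measure (Zs \<omega> k) (band (1 / real (Suc m)) q) \<le> \<epsilon> / 2) sequentially" for k
    proof -
      have zero: "measure (Zs \<omega> k) (band 0 x) = 0" if x: "x \<in> Box" for x
      proof -
        have xR: "x \<in> Rp2" using x Box_Rp2 by auto
        have "meas_plus (Zs \<omega>) (Cx x) = 0" using I xR by (simp add: Iset_def)
        then have "emeasure (Zs \<omega> k) (Cx x) = 0" by (simp add: meas_plus_def sum_eq_0_iff)
        then show ?thesis using band0_eq_Cx[OF xR] by (simp add: measure_def)
      qed
      have cB: "compact Box" by (simp add: Box_def compact_cbox)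
      obtain \<delta> where \<delta>: "\<delta> > 0" "\<forall>x\<in>Box. measure (Zs \<omega> k) (band \<delta> x) < \<epsilon> / 2"
        using band_uniform[OF ZsF[OF sp] ZsS[OF sp] cB zero e2] by blast
      obtain m0 where m0: "1 / real (Suc m0) < \<delta>" using \<delta>(1) by (rule nat_approx_posE)
      show ?thesis unfolding eventually_sequentially
      proof (intro exI allI impI ballI)
        fix m q assume m: "m0 \<le> m" and q: "q \<in> Qb"
        have "1 / real (Suc m) \<le> 1 / real (Suc m0)" using m by (intro divide_left_mono) auto
        then have "band (1 / real (Suc m)) q \<subseteq> band \<delta> q" using m0 by (auto simp: band_def)
        then have "measure (Zs \<omega> k) (band (1 / real (Suc m)) q) \<le> measure (Zs \<omega> k) (band \<delta> q)"
          using finite_measure.finite_measure_mono[OF ZsF[OF sp]] ZsS[OF sp] by simp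
        also have "\<dots> < \<epsilon> / 2" using \<delta>(2) q by (auto simp: Qb_def)
        finally show "measure (Zs \<omega> k) (band (1 / real (Suc m)) q) \<le> \<epsilon> / 2" by simp
      qed
    qed
    then have "eventually (\<lambda>m. \<forall>k. \<forall>q\<in>Qb. measure (Zs \<omega> k) (band (1 / real (Suc m)) q) \<le> \<epsilon> / 2) sequentially"
      by (rule eventually_all_finite)
    then obtain m where "\<forall>k. \<forall>q\<in>Qb. measure (Zs \<omega> k) (band (1 / real (Suc m)) q) \<le> \<epsilon> / 2"
      by (auto simp: eventually_sequentially)
    then show ?case using sp by (auto simp: E_def)
  qed
  have "P.prob (\<Union>m. E m) = P.prob (space P)"
  proof (rule measure_eq_AE)
    show "AE x in P. (x \<in> (\<Union>m. E m)) = (x \<in> space P)"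
      using E_AE by eventually_elim (auto simp: E_def)
  qed (use E_sets in auto)
  then have EU1: "P.prob (\<Union>m. E m) = 1" using P.prob_space by simp
  have "(\<lambda>m. P.prob (E m)) \<longlonglongrightarrow> P.prob (\<Union>m. E m)"
    by (rule P.finite_Lim_measure_incseq) (use E_sets E_inc in auto)
  then have "(\<lambda>m. P.prob (E m)) \<longlonglongrightarrow> 1" using EU1 by simp
  moreover have "1 - \<eta> / 2 < (1::real)" using eta_pos by simp
  ultimately have "eventually (\<lambda>m. 1 - \<eta> / 2 < P.prob (E m)) sequentially"
    by (rule order_tendstoD(1))
  then obtain m where Em: "P.prob (E m) > 1 - \<eta> / 2" by (auto simp: eventually_sequentially)
  have TE: "P.prob (T R \<inter> E m) \<ge> 1 - \<eta>"
  proof -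
    have "P.prob (T R - E m) = P.prob (T R) - P.prob (T R \<inter> E m)"
      by (rule P.finite_measure_Diff') (use T_sets E_sets in auto)
    moreover have "P.prob (T R - E m) \<le> P.prob (space P - E m)"
      by (rule P.finite_measure_mono) (use T_sets[of R] E_sets[of m] sets.sets_into_space in auto)
    moreover have "P.prob (space P - E m) = 1 - P.prob (E m)" by (rule P.prob_compl[OF E_sets])
    ultimately show ?thesis using TR Em by linarith
  qed

  define \<kappa> where "\<kappa> = 1 / (3 * real (Suc m))"
  have \<kappa>pos: "\<kappa> > 0" by (simp add: \<kappa>_def)
  have \<kappa>le: "\<kappa> \<le> 1" by (simp add: \<kappa>_def field_simps)
  have \<kappa>3: "3 * \<kappa> = 1 / real (Suc m)" by (simp add: \<kappa>_def field_simps)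
  have \<kappa>Q: "\<kappa> \<in> \<rat>" unfolding \<kappa>_def by (intro Rats_divide Rats_mult) auto
  define N where "N = nat \<lceil>(real R + 2) / \<kappa>\<rceil>"
  define G where "G = (\<lambda>(i, j). (\<kappa> * real i, \<kappa> * real j)) ` ({..N} \<times> {..N})"
  define FS where "FS = insert (tailf (real R + 1)) (psi \<kappa> ` G)"
  have FS_fin: "finite FS" by (simp add: FS_def G_def)
  have FS_props: "continuous_on UNIV f \<and> (\<forall>z. 0 \<le> f z \<and> f z \<le> 1)" if "f \<in> FS" for f
    using that \<kappa>pos unfolding FS_def
    by (auto intro: continuous_tailf continuous_psi simp: tailf_def psi_def clamp01_bounds)
  have FS_meas: "f \<in> borel_measurable borel" if "f \<in> FS" for f
    using FS_props[OF that] by (simp add: borel_measurable_continuous_onI)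
  have NB: "\<kappa> * real N \<le> real R + 3"
  proof -
    have t0: "0 \<le> (real R + 2) / \<kappa>" using \<kappa>pos by simp
    then have c0: "0 \<le> \<lceil>(real R + 2) / \<kappa>\<rceil>" by linarith
    have "real N = of_int \<lceil>(real R + 2) / \<kappa>\<rceil>" unfolding N_def using c0 by simp
    also have "\<dots> \<le> (real R + 2) / \<kappa> + 1" using ceiling_correct[of "(real R + 2) / \<kappa>"] by linarith
    finally have "real N \<le> (real R + 2) / \<kappa> + 1" .
    then have "\<kappa> * real N \<le> \<kappa> * ((real R + 2) / \<kappa> + 1)" using \<kappa>pos by (intro mult_left_mono) auto
    also have "\<dots> = real R + 2 + \<kappa>" using \<kappa>pos by (simp add: field_simps)
    finally show ?thesis using \<kappa>le by simp
  qed
  have G_Qb: "g \<in> Qb" if gG: "g \<in> G" for g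
  proof -
    obtain i j where g: "g = (\<kappa> * real i, \<kappa> * real j)" "i \<le> N" "j \<le> N" using gG by (auto simp: G_def)
    have "\<kappa> * real i \<le> \<kappa> * real N" "\<kappa> * real j \<le> \<kappa> * real N" using g \<kappa>pos by (auto intro: mult_left_mono)
    then have "\<kappa> * real i \<le> real R + 3" "\<kappa> * real j \<le> real R + 3" using NB by linarith+
    then show ?thesis using g \<kappa>pos \<kappa>Q by (auto simp: Qb_def Box_mem)
  qed
  define Mx where "Mx \<zeta> = Max ((\<lambda>kf. integral\<^sup>L (\<zeta> (fst kf)) (snd kf)) ` (UNIV \<times> FS))" for \<zeta> :: "'k \<Rightarrow> (real \<times> real) measure"
  define Fn where "Fn s = clamp01 ((\<epsilon> - Mx (fst s)) / (\<epsilon> / 2))" for s :: "'k mstate"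
  have Idx1: "finite ((UNIV :: 'k set) \<times> FS)" by (rule finite_cartesian_product) (simp_all add: FS_fin)
  have Idx2: "(UNIV :: 'k set) \<times> FS \<noteq> {}" by (simp add: FS_def)
  note Idx = Idx1 Idx2

  define Xs where "Xs n \<omega> = ((\<lambda>k. Zbar0 n (Zp n \<omega>) (wt n \<omega>) (pt n \<omega>) (cls n \<omega>) k),
                 (\<lambda>k. integral\<^sup>L (Zbar0 n (Zp n \<omega>) (wt n \<omega>) (pt n \<omega>) (cls n \<omega>) k) fst),
                 (\<lambda>k. integral\<^sup>L (Zbar0 n (Zp n \<omega>) (wt n \<omega>) (pt n \<omega>) (cls n \<omega>) k) snd),
                 Winit (Zp n \<omega>) (wt n \<omega>))" for n \<omega>
  define Ys where "Ys \<omega> = (Zs \<omega>, \<lambda>k. integral\<^sup>L (Zs \<omega> k) fst, \<lambda>k. integral\<^sup>L (Zs \<omega> k) snd, wtheta (Zs \<omega>))" for \<omega>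
  have Zb_meas: "(\<lambda>\<omega>. integral\<^sup>L (Zbar0 n (Zp n \<omega>) (wt n \<omega>) (pt n \<omega>) (cls n \<omega>) k) f) \<in> borel_measurable (M n)"
    if "f \<in> FS" for n k f
  proof (rule integral_kernel_measurable)
    show "(\<lambda>\<omega>. emeasure (Zbar0 n (Zp n \<omega>) (wt n \<omega>) (pt n \<omega>) (cls n \<omega>) k) A) \<in> borel_measurable (M n)"
      if "A \<in> sets borel" for A
      by (rule Zbar0_emeasure_measurable[OF Zp_meas wt_meas pt_meas cls_meas that])
  qed (use FS_meas[OF that] FS_props[OF that] in auto)
  have Zs_int_meas: "(\<lambda>\<omega>. integral\<^sup>L (Zs \<omega> k) f) \<in> borel_measurable P" if "f \<in> FS" for k f
  proof (rule integral_kernel_measurable)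
    show "(\<lambda>\<omega>. emeasure (Zs \<omega> k) A) \<in> borel_measurable P" if "A \<in> sets borel" for A
      by (rule Zs_em[OF that])
  qed (use FS_meas[OF that] FS_props[OF that] ZsS in auto)
  have FX_meas: "(\<lambda>\<omega>. Fn (Xs n \<omega>)) \<in> borel_measurable (M n)" for n
  proof -
    have "(\<lambda>\<omega>. Max ((\<lambda>kf. integral\<^sup>L (Zbar0 n (Zp n \<omega>) (wt n \<omega>) (pt n \<omega>) (cls n \<omega>) (fst kf)) (snd kf)) ` (UNIV \<times> FS)))
        \<in> borel_measurable (M n)"
      by (rule borel_measurable_Max[OF Idx(1)]) (use Zb_meas in auto)
    then show ?thesis unfolding Fn_def Mx_def Xs_def by simp measurable
  qed
  have FY_meas: "(\<lambda>\<omega>. Fn (Ys \<omega>)) \<in> borel_measurable P"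
  proof -
    have "(\<lambda>\<omega>. Max ((\<lambda>kf. integral\<^sup>L (Zs \<omega> (fst kf)) (snd kf)) ` (UNIV \<times> FS))) \<in> borel_measurable P"
      by (rule borel_measurable_Max[OF Idx(1)]) (use Zs_int_meas in auto)
    then show ?thesis unfolding Fn_def Mx_def Ys_def by simp measurable
  qed
  have Fn_bd: "0 \<le> Fn s" "Fn s \<le> 1" for s by (simp_all add: Fn_def clamp01_bounds)
  have lim: "(\<lambda>n. \<integral>\<omega>. Fn (Xs n \<omega>) \<partial>M n) \<longlonglongrightarrow> (\<integral>\<omega>. Fn (Ys \<omega>) \<partial>P)"
    unfolding Xs_def Ys_def
  proof (rule conv[unfolded conv_in_dist_def, rule_format], intro conjI)
    show "\<exists>B. \<forall>s\<in>state_space. \<bar>Fn s\<bar> \<le> B"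
      by (rule exI[of _ 1]) (auto simp: Fn_def clamp01_def)
    show "\<forall>ss s. (\<forall>m. ss m \<in> state_space) \<and> s \<in> state_space \<and> state_conv ss s \<longrightarrow> (\<lambda>m. Fn (ss m)) \<longlonglongrightarrow> Fn s"
    proof (intro allI impI)
      fix ss :: "nat \<Rightarrow> 'k mstate" and s assume H: "(\<forall>m. ss m \<in> state_space) \<and> s \<in> state_space \<and> state_conv ss s"
      then have wc: "weak_conv (\<lambda>m. fst (ss m) k) (fst s k)" for k by (simp add: state_conv_def)
      have "((\<lambda>m. integral\<^sup>L (fst (ss m) (fst kf)) (snd kf)) \<longlongrightarrow> integral\<^sup>L (fst s (fst kf)) (snd kf)) sequentially"
        if "kf \<in> UNIV \<times> FS" for kf
      proof -
        have "snd kf \<in> FS" using that by auto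
        from FS_props[OF this] have "continuous_on UNIV (snd kf)" "bounded (range (snd kf))"
          by (auto intro: bounded_01_range)
        then show ?thesis using wc[of "fst kf"] unfolding weak_conv_def by blast
      qed
      then have "((\<lambda>m. Mx (fst (ss m))) \<longlongrightarrow> Mx (fst s)) sequentially"
        unfolding Mx_def by (rule tendsto_Max_finite[OF Idx])
      then show "(\<lambda>m. Fn (ss m)) \<longlonglongrightarrow> Fn s"
        unfolding Fn_def by (intro clamp01_tendsto tendsto_intros) (use eps_pos in auto)
    qed
  qed (use FX_meas FY_meas in \<open>simp_all add: Xs_def Ys_def\<close>)

  have FY1: "Fn (Ys \<omega>) = 1" if \<omega>: "\<omega> \<in> T R \<inter> E m" for \<omega>
  proof -
    have sp: "\<omega> \<in> space P" using \<omega> by (simp add: T_def)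
    have le: "integral\<^sup>L (Zs \<omega> (fst kf)) (snd kf) \<le> \<epsilon> / 2" if kf: "kf \<in> UNIV \<times> FS" for kf
    proof -
      obtain k f where kf': "kf = (k, f)" "f \<in> FS" using kf by auto
      show ?thesis
      proof (cases "f = tailf (real R + 1)")
        case True
        have "integral\<^sup>L (Zs \<omega> k) f \<le> measure (Zs \<omega> k) (Tail (real R + 1))"
          by (rule integral_le_measure[OF ZsF[OF sp] ZsS[OF sp] Tail_borel FS_meas[OF kf'(2)]])
             (use True tailf_le_Tail FS_props[OF kf'(2)] in auto)
        also have "\<dots> \<le> \<epsilon> / 2" using \<omega> by (simp add: T_def)
        finally show ?thesis using kf' by simp
      next
        case False
        then obtain g where g: "g \<in> G" "f = psi \<kappa> g" using kf'(2) by (auto simp: FS_def)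
        have "integral\<^sup>L (Zs \<omega> k) f \<le> measure (Zs \<omega> k) (band (3 * \<kappa>) g)"
          by (rule integral_le_measure[OF ZsF[OF sp] ZsS[OF sp] band_borel FS_meas[OF kf'(2)]])
             (use g psi_le_band[OF \<kappa>pos] FS_props[OF kf'(2)] in auto)
        also have "\<dots> \<le> \<epsilon> / 2" using \<omega> G_Qb[OF g(1)] \<kappa>3 by (simp add: E_def)
        finally show ?thesis using kf' by simp
      qed
    qed
    have "Mx (Zs \<omega>) \<le> \<epsilon> / 2" unfolding Mx_def using Idx le by (subst Max_le_iff) auto
    then have "1 \<le> (\<epsilon> - Mx (Zs \<omega>)) / (\<epsilon> / 2)" using e2 by (simp add: le_divide_eq)
    then show ?thesis unfolding Fn_def Ys_def by (simp add: clamp01_one)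
  qed
  have TE_sets: "T R \<inter> E m \<in> sets P" using T_sets E_sets by auto
  have lowY: "1 - \<eta> \<le> (\<integral>\<omega>. Fn (Ys \<omega>) \<partial>P)"
  proof -
    have "P.prob (T R \<inter> E m) = (\<integral>\<omega>. indicator (T R \<inter> E m) \<omega> \<partial>P)"
      using TE_sets by (simp add: sets.Int_space_eq2)
    also have "\<dots> \<le> (\<integral>\<omega>. Fn (Ys \<omega>) \<partial>P)"
    proof (rule integral_mono)
      show "integrable P (indicator (T R \<inter> E m) :: _ \<Rightarrow> real)"
        by (rule P.integrable_const_bound[where B=1]) (use TE_sets in auto)
      show "integrable P (\<lambda>\<omega>. Fn (Ys \<omega>))"
        by (rule P.integrable_const_bound[where B=1]) (use FY_meas Fn_bd in auto)
      show "indicator (T R \<inter> E m) \<omega> \<le> Fn (Ys \<omega>)" if "\<omega> \<in> space P" for \<omega>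
        using FY1[of \<omega>] Fn_bd[of "Ys \<omega>"] by (cases "\<omega> \<in> T R \<inter> E m") auto
    qed
    finally show ?thesis using TE by linarith
  qed

  define S where "S n = {\<omega> \<in> space (M n).
                 (MAX k. SUP x\<in>Rp2. emeasure (Zbar0 n (Zp n \<omega>) (wt n \<omega>) (pt n \<omega>) (cls n \<omega>) k)
                                       (Ckappa \<kappa> x)) \<le> ennreal \<epsilon>}" for n
  define Q2 where "Q2 = {q \<in> Rp2. fst q \<in> \<rat> \<and> snd q \<in> \<rat>}"
  have Q2c: "countable Q2"
    by (rule countable_subset[of _ "\<rat> \<times> \<rat>"]) (auto simp: Q2_def countable_rat mem_Times_iff)
  have Sn_iff: "(MAX k. SUP x\<in>Rp2. emeasure (Zbar0 n (Zp n \<omega>) (wt n \<omega>) (pt n \<omega>) (cls n \<omega>) k) (Ckappa \<kappa> x)) \<le> ennreal \<epsilon>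
      \<longleftrightarrow> (\<forall>k. \<forall>x\<in>Rp2. emeasure (Zbar0 n (Zp n \<omega>) (wt n \<omega>) (pt n \<omega>) (cls n \<omega>) k) (Ckappa \<kappa> x) \<le> ennreal \<epsilon>)"
    for n \<omega>
  proof -
    have "finite (range (\<lambda>k::'k. SUP x\<in>Rp2. emeasure (Zbar0 n (Zp n \<omega>) (wt n \<omega>) (pt n \<omega>) (cls n \<omega>) k) (Ckappa \<kappa> x)))"
      by simp
    then show ?thesis by (simp add: Max_le_iff SUP_le_iff)
  qed
  have S_eq: "S n = {\<omega> \<in> space (M n). \<forall>k. \<forall>q\<in>Q2. emeasure (Zbar0 n (Zp n \<omega>) (wt n \<omega>) (pt n \<omega>) (cls n \<omega>) k) (Ckappa \<kappa> q) \<le> ennreal \<epsilon>}"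
    for n
    unfolding S_def Sn_iff
  proof (intro Collect_cong conj_cong refl iffI allI ballI)
    fix \<omega> k q
    assume "\<forall>k. \<forall>x\<in>Rp2. emeasure (Zbar0 n (Zp n \<omega>) (wt n \<omega>) (pt n \<omega>) (cls n \<omega>) k) (Ckappa \<kappa> x) \<le> ennreal \<epsilon>"
      and "q \<in> Q2"
    then show "emeasure (Zbar0 n (Zp n \<omega>) (wt n \<omega>) (pt n \<omega>) (cls n \<omega>) k) (Ckappa \<kappa> q) \<le> ennreal \<epsilon>"
      by (auto simp: Q2_def)
  next
    fix \<omega> k x
    assume H: "\<forall>k. \<forall>q\<in>Q2. emeasure (Zbar0 n (Zp n \<omega>) (wt n \<omega>) (pt n \<omega>) (cls n \<omega>) k) (Ckappa \<kappa> q) \<le> ennreal \<epsilon>"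
      and x: "x \<in> Rp2"
    let ?Pts = "(\<lambda>j. (wt n \<omega> j, pt n \<omega> j)) ` {1..Zp n \<omega>}"
    obtain q where q: "q \<in> Rp2" "fst q \<in> \<rat>" "snd q \<in> \<rat>" "\<forall>z\<in>?Pts. z \<in> Ckappa \<kappa> x \<longrightarrow> z \<in> Ckappa \<kappa> q"
      using Ckappa_rational_approx[of ?Pts x \<kappa>] x \<kappa>pos by auto
    have "emeasure (Zbar0 n (Zp n \<omega>) (wt n \<omega>) (pt n \<omega>) (cls n \<omega>) k) (Ckappa \<kappa> x)
        \<le> emeasure (Zbar0 n (Zp n \<omega>) (wt n \<omega>) (pt n \<omega>) (cls n \<omega>) k) (Ckappa \<kappa> q)"
      unfolding Zbar0_emeasure[OF Ckappa_borel]
    proof (intro ennreal_leI mult_left_mono sum_mono)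
      fix j assume j: "j \<in> {1..Zp n \<omega>}"
      then have "(wt n \<omega> j, pt n \<omega> j) \<in> Ckappa \<kappa> x \<longrightarrow> (wt n \<omega> j, pt n \<omega> j) \<in> Ckappa \<kappa> q"
        using q(4) by blast
      then show "(if cls n \<omega> j = k \<and> 0 < wt n \<omega> j \<and> 0 < pt n \<omega> j \<and> (wt n \<omega> j, pt n \<omega> j) \<in> Ckappa \<kappa> x then 1 else 0)
          \<le> (if cls n \<omega> j = k \<and> 0 < wt n \<omega> j \<and> 0 < pt n \<omega> j \<and> (wt n \<omega> j, pt n \<omega> j) \<in> Ckappa \<kappa> q then 1 else (0::real))"
        by auto
    qed simp
    also have "\<dots> \<le> ennreal \<epsilon>"
    proof -
      have "q \<in> Q2" using q by (simp add: Q2_def)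
      then show ?thesis using H by blast
    qed
    finally show "emeasure (Zbar0 n (Zp n \<omega>) (wt n \<omega>) (pt n \<omega>) (cls n \<omega>) k) (Ckappa \<kappa> x) \<le> ennreal \<epsilon>" .
  qed
  have S_sets: "S n \<in> sets (M n)" for n
  proof -
    have "{\<omega> \<in> space (M n). \<forall>q\<in>Q2. emeasure (Zbar0 n (Zp n \<omega>) (wt n \<omega>) (pt n \<omega>) (cls n \<omega>) k) (Ckappa \<kappa> q) \<le> ennreal \<epsilon>}
        \<in> sets (M n)" for k
    proof (rule sets.sets_Collect_countable_All'[OF _ Q2c])
      fix q
      note [measurable] = Zbar0_emeasure_measurable[OF Zp_meas wt_meas pt_meas cls_meas Ckappa_borel]
      show "{\<omega> \<in> space (M n). emeasure (Zbar0 n (Zp n \<omega>) (wt n \<omega>) (pt n \<omega>) (cls n \<omega>) k) (Ckappa \<kappa> q) \<le> ennreal \<epsilon>}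
          \<in> sets (M n)"
        by measurable
    qed
    then show ?thesis unfolding S_eq by (intro sets.sets_Collect_countable_All)
  qed
  have FX_le: "Fn (Xs n \<omega>) \<le> indicator (S n) \<omega>" if sp: "\<omega> \<in> space (M n)" for n \<omega>
  proof (cases "Fn (Xs n \<omega>) > 0")
    case False
    then have "Fn (Xs n \<omega>) \<le> 0" by simp
    moreover have "0 \<le> (indicator (S n) \<omega> :: real)" by simp
    ultimately show ?thesis by linarith
  next
    case True
    let ?Z = "\<lambda>k. Zbar0 n (Zp n \<omega>) (wt n \<omega>) (pt n \<omega>) (cls n \<omega>) k"
    have "(\<epsilon> - Mx ?Z) / (\<epsilon> / 2) > 0" using True clamp01_pos by (simp add: Fn_def Xs_def)
    then have Mlt: "Mx ?Z < \<epsilon>" using e2 by (simp add: zero_less_divide_iff)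
    have intlt: "integral\<^sup>L (?Z k) f < \<epsilon>" if f: "f \<in> FS" for k f
    proof -
      have "integral\<^sup>L (?Z k) f \<le> Mx ?Z" unfolding Mx_def
        by (rule Max_ge[OF finite_imageI[OF Idx(1)]]) (use f in force)
      then show ?thesis using Mlt by simp
    qed
    have "emeasure (?Z k) (Ckappa \<kappa> x) \<le> ennreal \<epsilon>" if x: "x \<in> Rp2" for k x
    proof -
      obtain f where f: "f \<in> FS" "\<And>z. z \<in> Ckappa \<kappa> x \<Longrightarrow> f z = 1"
      proof -
        from cover_Ckappa[OF \<kappa>pos \<kappa>le x, of "real R"]
        show ?thesis
        proof
          assume "\<forall>z\<in>Ckappa \<kappa> x. tailf (real R + 1) z = 1"
          then show ?thesis using that[of "tailf (real R + 1)"] by (auto simp: FS_def)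
        next
          assume "\<exists>i\<le>nat \<lceil>(real R + 2) / \<kappa>\<rceil>. \<exists>j\<le>nat \<lceil>(real R + 2) / \<kappa>\<rceil>.
             \<forall>z\<in>Ckappa \<kappa> x. psi \<kappa> (\<kappa> * real i, \<kappa> * real j) z = 1"
          then obtain i j where ij: "i \<le> N" "j \<le> N" "\<forall>z\<in>Ckappa \<kappa> x. psi \<kappa> (\<kappa> * real i, \<kappa> * real j) z = 1"
            by (auto simp: N_def)
          have "psi \<kappa> (\<kappa> * real i, \<kappa> * real j) \<in> FS" using ij by (force simp: FS_def G_def)
          then show ?thesis using that ij(3) by blast
        qed
      qed
      have "emeasure (?Z k) (Ckappa \<kappa> x) \<le> ennreal (integral\<^sup>L (?Z k) f)"
        by (rule emeasure_le_integral[OF Zbar0_finite Zbar0_sets Ckappa_borel FS_meas[OF f(1)]])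
           (use FS_props[OF f(1)] f(2) in auto)
      also have "\<dots> \<le> ennreal \<epsilon>" using intlt[OF f(1), of k] by (intro ennreal_leI less_imp_le)
      finally show ?thesis .
    qed
    then have "\<omega> \<in> S n" using sp unfolding S_def Sn_iff by auto
    then show ?thesis using Fn_bd by simp
  qed
  have FX_int: "(\<integral>\<omega>. Fn (Xs n \<omega>) \<partial>M n) \<le> measure (M n) (S n)" for n
  proof -
    interpret Mn: prob_space "M n" by (rule M_prob)
    have "(\<integral>\<omega>. Fn (Xs n \<omega>) \<partial>M n) \<le> (\<integral>\<omega>. indicator (S n) \<omega> \<partial>M n)"
    proof (rule integral_mono)
      show "integrable (M n) (indicator (S n) :: _ \<Rightarrow> real)"
        by (rule Mn.integrable_const_bound[where B=1]) (use S_sets in auto)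
      show "integrable (M n) (\<lambda>\<omega>. Fn (Xs n \<omega>))"
        by (rule Mn.integrable_const_bound[where B=1]) (use FX_meas Fn_bd in auto)
    qed (rule FX_le)
    also have "\<dots> = measure (M n) (S n)" using S_sets[of n] by (simp add: sets.Int_space_eq2)
    finally show ?thesis .
  qed

  have "Liminf sequentially (\<lambda>n. ereal (\<integral>\<omega>. Fn (Xs n \<omega>) \<partial>M n)) = ereal (\<integral>\<omega>. Fn (Ys \<omega>) \<partial>P)"
    by (rule lim_imp_Liminf) (auto intro: lim)
  moreover have "Liminf sequentially (\<lambda>n. ereal (\<integral>\<omega>. Fn (Xs n \<omega>) \<partial>M n))
      \<le> Liminf sequentially (\<lambda>n. ereal (measure (M n) (S n)))"
    by (intro Liminf_mono always_eventually allI) (simp add: FX_int)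
  ultimately have "ereal (1 - \<eta>) \<le> Liminf sequentially (\<lambda>n. ereal (measure (M n) (S n)))"
    using lowY by (metis ereal_less_eq(3) order_trans)
  then show ?thesis using \<kappa>pos unfolding S_def by blast
qed


end
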